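(* Let $n\ge2$ and let $\mathbb{K}$ be a field with $\operatorname{char}\mathbb{K}$ either $0$ or coprime to both $n$ and $n-1$. Let $A_n=\mathbb{K}[x,y]/(y^{2n+3},\, x^ny^2-y^{n+2},\, x^{2n+1}-xy^{n+1})$. Then every $\mathbb{K}$-linear derivation $\partial\colon A_n\to A_n$ satisfies $\partial(y^{2n+1})=0$.
   Context: A derivation of $A_n$ is a $\mathbb{K}$-linear map $\partial\colon A_n\to A_n$ satisfying $\partial(uv)=\partial(u)v+u\partial(v)$ for all $u,v\in A_n$. *)

theory Defs
  imports "HOL-Library.Poly_Mapping" "HOL-Library.Product_Plus"
begin

text \<open>Bivariate polynomials K[x,y]: finitely supported maps from exponent pairs (i,j)
  (monomial x^i y^j) to coefficients, with convolution product.\<close>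
type_synonym 'k bipoly = "(nat \<times> nat) \<Rightarrow>\<^sub>0 'k"

definition bvX :: "'k::field bipoly" where "bvX = Poly_Mapping.single (1,0) 1"
definition bvY :: "'k::field bipoly" where "bvY = Poly_Mapping.single (0,1) 1"
definition bconst :: "'k::field \<Rightarrow> 'k bipoly" where "bconst c = Poly_Mapping.single (0,0) c"

definition An_ideal :: "nat \<Rightarrow> 'k::field bipoly set" where
  "An_ideal n = {a * bvY ^ (2*n+3) + b * (bvX ^ n * bvY ^ 2 - bvY ^ (n+2))
                 + c * (bvX ^ (2*n+1) - bvX * bvY ^ (n+1)) | a b c. True}"

text \<open>Equality in A_n = K[x,y]/I, expressed on representatives.\<close>
definition An_eq :: "nat \<Rightarrow> 'k::field bipoly \<Rightarrow> 'k bipoly \<Rightarrow> bool" where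
  "An_eq n p q \<longleftrightarrow> p - q \<in> An_ideal n"

definition An_derivation :: "nat \<Rightarrow> ('k::field bipoly \<Rightarrow> 'k bipoly) \<Rightarrow> bool" where
  "An_derivation n D \<longleftrightarrow>
     (\<forall>p q. An_eq n p q \<longrightarrow> An_eq n (D p) (D q)) \<and>
     (\<forall>p q. An_eq n (D (p + q)) (D p + D q)) \<and>
     (\<forall>c p. An_eq n (D (bconst c * p)) (bconst c * D p)) \<and>
     (\<forall>p q. An_eq n (D (p * q)) (D p * q + p * D q))"

end

theory Submission
  imports Defs
begin

lemma key0:
  fixes X Y A B f g :: "'a::comm_ring_1" and m :: nat
  shows "of_nat (m+1) * (B*B*Y^4 * g) =
    - 2 * (B*Y) * (of_nat (m+2) * (A*X) * Y^2 * f + 2 * (A*X^2) * Y * g - of_nat (m+4) * (B*Y^3) * g)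
    + (A*X) * ((of_nat (2*m+5) * (A*A*X^4) - B*Y^3) * f - of_nat (m+3) * X * (B*Y^2) * g)
    - of_nat (2*m+5) * f * A * (A*A*X^5 - X * (B*Y^3))
    + of_nat (m+7) * g * B * ((A*X^2) * Y^2 - B*Y^4)"
  by (simp add: algebra_simps power2_eq_square power3_eq_cube eval_nat_numeral)

lemma key1:
  fixes X Y f g :: "'a::comm_ring_1" and m :: nat
  shows "of_nat (m+1) * (Y^(2*m+4) * g) =
    - 2 * Y^(m+1) * (of_nat (m+2) * X^(m+1) * Y^2 * f + 2 * X^(m+2) * Y * g - of_nat (m+4) * Y^(m+3) * g)
    + X^(m+1) * ((of_nat (2*m+5) * X^(2*m+4) - Y^(m+3)) * f - of_nat (m+3) * X * Y^(m+2) * g)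
    - of_nat (2*m+5) * f * X^m * (X^(2*m+5) - X * Y^(m+3))
    + of_nat (m+7) * g * Y^m * (X^(m+2) * Y^2 - Y^(m+4))"
proof -
  have e: "Y^(2*m+4) = Y^m*Y^m*Y^4" "Y^(m+1) = Y^m*Y" "X^(m+1) = X^m*X" "X^(m+2) = X^m*X^2"
    "Y^(m+3) = Y^m*Y^3" "X^(2*m+4) = X^m*X^m*X^4" "Y^(m+2) = Y^m*Y^2" "X^(2*m+5) = X^m*X^m*X^5"
    "Y^(m+4) = Y^m*Y^4"
    by (simp_all only: power_add mult_2 power_one_right)
  show ?thesis unfolding e by (rule key0)
qed

lemma comb2:
  fixes d a b p q r s t y2 xp :: "'a::comm_ring_1"
  shows "d - (d - (a - b)) - (a - (p*y2 + xp*q)) - y2*(p - r) - xp*(q - s) + (b - t) = y2*r + xp*s - t"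
  by (simp add: algebra_simps)

lemma comb3:
  fixes d a b f q r s x y3 :: "'a::comm_ring_1"
  shows "d - (d - (a - b)) - (a - r) + (b - (f*y3 + x*q)) + x*(q - s) = r - f*y3 - x*s"
  by (simp add: algebra_simps)

lemma comb2':
  fixes c x1 y2 f xp y g t :: "'a::comm_ring_1"
  shows "y2*(c*x1*f) + xp*(2*y*g) - t = c*x1*y2*f + 2*xp*y*g - t"
  by (simp add: algebra_simps)

lemma comb3':
  fixes c x4 f y3 x c' y2 g :: "'a::comm_ring_1"
  shows "c*x4*f - f*y3 - x*(c'*y2*g) = (c*x4 - y3)*f - c'*x*y2*g"
  by (simp add: algebra_simps)

lemma ideal_add: "p \<in> An_ideal n \<Longrightarrow> q \<in> An_ideal n \<Longrightarrow> p + q \<in> An_ideal n"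
proof -
  assume "p \<in> An_ideal n" "q \<in> An_ideal n"
  then obtain a b c a' b' c' where
    p: "p = a * bvY ^ (2*n+3) + b * (bvX ^ n * bvY ^ 2 - bvY ^ (n+2)) + c * (bvX ^ (2*n+1) - bvX * bvY ^ (n+1))" and
    q: "q = a' * bvY ^ (2*n+3) + b' * (bvX ^ n * bvY ^ 2 - bvY ^ (n+2)) + c' * (bvX ^ (2*n+1) - bvX * bvY ^ (n+1))"
    unfolding An_ideal_def by blast
  have "p + q = (a+a') * bvY ^ (2*n+3) + (b+b') * (bvX ^ n * bvY ^ 2 - bvY ^ (n+2)) + (c+c') * (bvX ^ (2*n+1) - bvX * bvY ^ (n+1))"
    unfolding p q by (simp add: algebra_simps)
  then show ?thesis unfolding An_ideal_def by blast
qed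

lemma ideal_mult: "p \<in> An_ideal n \<Longrightarrow> r * p \<in> An_ideal n"
proof -
  assume "p \<in> An_ideal n"
  then obtain a b c where
    p: "p = a * bvY ^ (2*n+3) + b * (bvX ^ n * bvY ^ 2 - bvY ^ (n+2)) + c * (bvX ^ (2*n+1) - bvX * bvY ^ (n+1))"
    unfolding An_ideal_def by blast
  have "r * p = (r*a) * bvY ^ (2*n+3) + (r*b) * (bvX ^ n * bvY ^ 2 - bvY ^ (n+2)) + (r*c) * (bvX ^ (2*n+1) - bvX * bvY ^ (n+1))"
    unfolding p by (simp add: algebra_simps)
  then show ?thesis unfolding An_ideal_def by blast
qed

lemma ideal_G2: "bvX ^ n * bvY ^ 2 - bvY ^ (n+2) \<in> An_ideal n"
proof -
  have "bvX ^ n * bvY ^ 2 - bvY ^ (n+2) = 0 * bvY ^ (2*n+3) + 1 * (bvX ^ n * bvY ^ 2 - bvY ^ (n+2)) + 0 * (bvX ^ (2*n+1) - bvX * bvY ^ (n+1))"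
    by simp
  then show ?thesis unfolding An_ideal_def by blast
qed

lemma ideal_G3: "bvX ^ (2*n+1) - bvX * bvY ^ (n+1) \<in> An_ideal n"
proof -
  have "bvX ^ (2*n+1) - bvX * bvY ^ (n+1) = 0 * bvY ^ (2*n+3) + 0 * (bvX ^ n * bvY ^ 2 - bvY ^ (n+2)) + 1 * (bvX ^ (2*n+1) - bvX * bvY ^ (n+1))"
    by simp
  then show ?thesis unfolding An_ideal_def by blast
qed

lemma ideal_neg: "p \<in> An_ideal n \<Longrightarrow> - p \<in> An_ideal n"
  using ideal_mult[of p n "-1"] by simp

lemma ideal_diff: "p \<in> An_ideal n \<Longrightarrow> q \<in> An_ideal n \<Longrightarrow> p - q \<in> An_ideal n"
  using ideal_add[of p n "-q"] ideal_neg[of q n] by simp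

lemma ideal_eq: "p \<in> An_ideal n \<Longrightarrow> p = q \<Longrightarrow> q \<in> An_ideal n"
  by simp

context
  fixes n :: nat and D :: "'k::field bipoly \<Rightarrow> 'k bipoly"
  assumes der: "An_derivation n D"
begin

lemma D_cong: "p - q \<in> An_ideal n \<Longrightarrow> D p - D q \<in> An_ideal n"
  using der unfolding An_derivation_def An_eq_def by blast

lemma D_add: "D (p + q) - (D p + D q) \<in> An_ideal n"
  using der unfolding An_derivation_def An_eq_def by blast

lemma D_mult: "D (p * q) - (D p * q + p * D q) \<in> An_ideal n"
  using der unfolding An_derivation_def An_eq_def by blast

lemma D_zero: "D 0 \<in> An_ideal n"
proof -
  have "D (0 + 0) - (D 0 + D 0) \<in> An_ideal n" by (rule D_add)
  then have "- D 0 \<in> An_ideal n" by simp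
  from ideal_neg[OF this] show ?thesis by simp
qed

lemma D_ideal: "p \<in> An_ideal n \<Longrightarrow> D p \<in> An_ideal n"
proof -
  assume "p \<in> An_ideal n"
  then have "D p - D 0 \<in> An_ideal n" by (intro D_cong) simp
  from ideal_add[OF this D_zero] show ?thesis by simp
qed

lemma D_diff: "D (p - q) - (D p - D q) \<in> An_ideal n"
proof -
  have "D (q + (p - q)) - (D q + D (p - q)) \<in> An_ideal n" by (rule D_add)
  from ideal_neg[OF this] show ?thesis by (simp add: algebra_simps)
qed

lemma D_pow: "D (Z ^ Suc k) - of_nat (Suc k) * Z ^ k * D Z \<in> An_ideal n"
proof (induction k)
  case 0
  have "(0::'k bipoly) \<in> An_ideal n" using ideal_mult[OF ideal_G2[of n], of 0] by simp
  then show ?case by simp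
next
  case (Suc k)
  have h: "D (Z * Z ^ Suc k) - (D Z * Z ^ Suc k + Z * D (Z ^ Suc k)) \<in> An_ideal n" by (rule D_mult)
  have "D (Z * Z ^ Suc k) - (D Z * Z ^ Suc k + Z * D (Z ^ Suc k))
        + Z * (D (Z ^ Suc k) - of_nat (Suc k) * Z ^ k * D Z) \<in> An_ideal n"
    by (rule ideal_add[OF h ideal_mult[OF Suc.IH]])
  then show ?case by (rule ideal_eq) (simp add: algebra_simps)
qed

end

lemma char_ne:
  fixes m :: nat
  assumes "CHAR('k::field) = 0 \<or> coprime CHAR('k) (m+1)"
  shows "(of_nat (m+1) :: 'k) \<noteq> 0"
proof
  assume h: "(of_nat (m+1) :: 'k) = 0"
  then have d: "CHAR('k) dvd (m+1)" by (metis of_nat_eq_0_iff_char_dvd)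
  show False
  proof (cases "CHAR('k) = 0")
    case True then show False using d by simp
  next
    case False
    then have "coprime CHAR('k) (m+1)" using assms by simp
    then have "is_unit CHAR('k)" using d coprime_common_divisor dvd_refl by metis
    then have "CHAR('k) dvd 1" by simp
    then have "(of_nat 1 :: 'k) = 0" by (metis of_nat_eq_0_iff_char_dvd)
    then show False by simp
  qed
qed

theorem theorem1p5:
  fixes n :: nat and D :: "'k::field bipoly \<Rightarrow> 'k bipoly"
  assumes "n \<ge> 2"
    and "CHAR('k) = 0 \<or> (coprime CHAR('k) n \<and> coprime CHAR('k) (n - 1))"
    and "An_derivation n D"
  shows "An_eq n (D (bvY ^ (2*n+1))) 0"
proof -
  obtain m where nm: "n = m + 2" using assms(1) by (metis add.commute le_Suc_ex)
  have ch: "CHAR('k) = 0 \<or> coprime CHAR('k) (m+1)" using assms(2) nm by auto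
  note der = assms(3)
  define X :: "'k bipoly" where "X = bvX"
  define Y :: "'k bipoly" where "Y = bvY"
  define f where "f = D X"
  define g where "g = D Y"
  define G2 where "G2 = X^(m+2) * Y^2 - Y^(m+4)"
  define G3 where "G3 = X^(2*m+5) - X * Y^(m+3)"
  have s: "Suc (m+1) = m+2" "Suc 1 = 2" "Suc (m+3) = m+4" "Suc (2*m+4) = 2*m+5" "Suc (m+2) = m+3" by simp_all
  have e: "n + 2 = m + 4" "2*n+1 = 2*m+5" "n+1 = m+3" using nm by simp_all
  have G2I: "G2 \<in> An_ideal n" unfolding G2_def X_def Y_def using ideal_G2[of n] unfolding e
    by (simp only: nm)
  have G3I: "G3 \<in> An_ideal n" unfolding G3_def X_def Y_def using ideal_G3[of n] unfolding e
    by (simp only: nm)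
  define R2 where "R2 = of_nat (m+2) * X^(m+1) * Y^2 * f + 2 * X^(m+2) * Y * g - of_nat (m+4) * Y^(m+3) * g"
  define R3 where "R3 = (of_nat (2*m+5) * X^(2*m+4) - Y^(m+3)) * f - of_nat (m+3) * X * Y^(m+2) * g"
  have R2I: "R2 \<in> An_ideal n"
  proof -
    have h0: "D G2 \<in> An_ideal n" by (rule D_ideal[OF der]) (rule G2I)
    have h1: "D G2 - (D (X^(m+2) * Y^2) - D (Y^(m+4))) \<in> An_ideal n" unfolding G2_def by (rule D_diff[OF der])
    have h2: "D (X^(m+2) * Y^2) - (D (X^(m+2)) * Y^2 + X^(m+2) * D (Y^2)) \<in> An_ideal n" by (rule D_mult[OF der])
    have h3: "D (X^(m+2)) - of_nat (m+2) * X^(m+1) * f \<in> An_ideal n"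
      using D_pow[OF der, of X "m+1", unfolded s] unfolding f_def .
    have h4: "D (Y^2) - 2 * Y * g \<in> An_ideal n"
      using D_pow[OF der, of Y 1, unfolded s power_one_right of_nat_numeral] unfolding g_def .
    have h5: "D (Y^(m+4)) - of_nat (m+4) * Y^(m+3) * g \<in> An_ideal n"
      using D_pow[OF der, of Y "m+3", unfolded s] unfolding g_def .
    have c1: "D G2 - (D G2 - (D (X^(m+2) * Y^2) - D (Y^(m+4)))) \<in> An_ideal n" by (rule ideal_diff[OF h0 h1])
    have c2: "D G2 - (D G2 - (D (X^(m+2) * Y^2) - D (Y^(m+4)))) - (D (X^(m+2) * Y^2) - (D (X^(m+2)) * Y^2 + X^(m+2) * D (Y^2))) \<in> An_ideal n"
      by (rule ideal_diff[OF c1 h2])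
    have c3: "D G2 - (D G2 - (D (X^(m+2) * Y^2) - D (Y^(m+4)))) - (D (X^(m+2) * Y^2) - (D (X^(m+2)) * Y^2 + X^(m+2) * D (Y^2)))
       - Y^2 * (D (X^(m+2)) - of_nat (m+2) * X^(m+1) * f) \<in> An_ideal n"
      by (rule ideal_diff[OF c2 ideal_mult[OF h3]])
    have c4: "D G2 - (D G2 - (D (X^(m+2) * Y^2) - D (Y^(m+4)))) - (D (X^(m+2) * Y^2) - (D (X^(m+2)) * Y^2 + X^(m+2) * D (Y^2)))
       - Y^2 * (D (X^(m+2)) - of_nat (m+2) * X^(m+1) * f) - X^(m+2) * (D (Y^2) - 2 * Y * g) \<in> An_ideal n"
      by (rule ideal_diff[OF c3 ideal_mult[OF h4]])
    have "D G2 - (D G2 - (D (X^(m+2) * Y^2) - D (Y^(m+4)))) - (D (X^(m+2) * Y^2) - (D (X^(m+2)) * Y^2 + X^(m+2) * D (Y^2)))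
       - Y^2 * (D (X^(m+2)) - of_nat (m+2) * X^(m+1) * f) - X^(m+2) * (D (Y^2) - 2 * Y * g)
       + (D (Y^(m+4)) - of_nat (m+4) * Y^(m+3) * g) \<in> An_ideal n"
      by (rule ideal_add[OF c4 h5])
    then have "Y^2 * (of_nat (m+2) * X^(m+1) * f) + X^(m+2) * (2 * Y * g) - of_nat (m+4) * Y^(m+3) * g \<in> An_ideal n"
      by (rule ideal_eq[OF _ comb2])
    then show ?thesis unfolding R2_def by (rule ideal_eq) (rule comb2')
  qed
  have R3I: "R3 \<in> An_ideal n"
  proof -
    have h0: "D G3 \<in> An_ideal n" by (rule D_ideal[OF der]) (rule G3I)
    have h1: "D G3 - (D (X^(2*m+5)) - D (X * Y^(m+3))) \<in> An_ideal n" unfolding G3_def by (rule D_diff[OF der])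
    have h2: "D (X^(2*m+5)) - of_nat (2*m+5) * X^(2*m+4) * f \<in> An_ideal n"
      using D_pow[OF der, of X "2*m+4", unfolded s] unfolding f_def .
    have h3: "D (X * Y^(m+3)) - (f * Y^(m+3) + X * D (Y^(m+3))) \<in> An_ideal n" unfolding f_def by (rule D_mult[OF der])
    have h4: "D (Y^(m+3)) - of_nat (m+3) * Y^(m+2) * g \<in> An_ideal n"
      using D_pow[OF der, of Y "m+2", unfolded s] unfolding g_def .
    have c1: "D G3 - (D G3 - (D (X^(2*m+5)) - D (X * Y^(m+3)))) \<in> An_ideal n" by (rule ideal_diff[OF h0 h1])
    have c2: "D G3 - (D G3 - (D (X^(2*m+5)) - D (X * Y^(m+3)))) - (D (X^(2*m+5)) - of_nat (2*m+5) * X^(2*m+4) * f) \<in> An_ideal n"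
      by (rule ideal_diff[OF c1 h2])
    have c3: "D G3 - (D G3 - (D (X^(2*m+5)) - D (X * Y^(m+3)))) - (D (X^(2*m+5)) - of_nat (2*m+5) * X^(2*m+4) * f)
       + (D (X * Y^(m+3)) - (f * Y^(m+3) + X * D (Y^(m+3)))) \<in> An_ideal n"
      by (rule ideal_add[OF c2 h3])
    have "D G3 - (D G3 - (D (X^(2*m+5)) - D (X * Y^(m+3)))) - (D (X^(2*m+5)) - of_nat (2*m+5) * X^(2*m+4) * f)
       + (D (X * Y^(m+3)) - (f * Y^(m+3) + X * D (Y^(m+3)))) + X * (D (Y^(m+3)) - of_nat (m+3) * Y^(m+2) * g) \<in> An_ideal n"
      by (rule ideal_add[OF c3 ideal_mult[OF h4]])
    then have "of_nat (2*m+5) * X^(2*m+4) * f - f * Y^(m+3) - X * (of_nat (m+3) * Y^(m+2) * g) \<in> An_ideal n"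
      by (rule ideal_eq[OF _ comb3])
    then show ?thesis unfolding R3_def by (rule ideal_eq) (rule comb3')
  qed
  have K: "- 2 * Y^(m+1) * R2 + X^(m+1) * R3 - of_nat (2*m+5) * f * X^m * G3 + of_nat (m+7) * g * Y^m * G2 \<in> An_ideal n"
    by (rule ideal_add[OF ideal_diff[OF ideal_add[OF ideal_mult[OF R2I] ideal_mult[OF R3I]] ideal_mult[OF G3I]] ideal_mult[OF G2I]])
  have K2: "of_nat (m+1) * (Y^(2*m+4) * g) \<in> An_ideal n"
    by (rule ideal_eq[OF K]) (unfold R2_def R3_def G2_def G3_def, rule key1[symmetric])
  have hD: "D (Y^(2*m+5)) - of_nat (2*m+5) * Y^(2*m+4) * g \<in> An_ideal n"
    using D_pow[OF der, of Y "2*m+4", unfolded s] unfolding g_def .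
  have "of_nat (m+1) * (D (Y^(2*m+5)) - of_nat (2*m+5) * Y^(2*m+4) * g) + of_nat (2*m+5) * (of_nat (m+1) * (Y^(2*m+4) * g)) \<in> An_ideal n"
    by (rule ideal_add[OF ideal_mult[OF hD] ideal_mult[OF K2]])
  then have "of_nat (m+1) * D (Y^(2*m+5)) \<in> An_ideal n" by (rule ideal_eq) (simp add: algebra_simps)
  then have L: "bconst (inverse (of_nat (m+1))) * (of_nat (m+1) * D (Y^(2*m+5))) \<in> An_ideal n"
    by (rule ideal_mult)
  have a: "(of_nat (m+1) :: 'k bipoly) = Poly_Mapping.single (0,0) (of_nat (m+1))"
    by (metis single_of_nat zero_prod_def)
  have inv: "bconst (inverse (of_nat (m+1))) * (of_nat (m+1) :: 'k bipoly) = 1"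
    unfolding a bconst_def mult_single using char_ne[OF ch]
    by (simp add: zero_prod_def[symmetric])
  have fin: "D (Y^(2*m+5)) \<in> An_ideal n" using L by (rule ideal_eq) (simp only: mult.assoc[symmetric] inv mult_1)
  show ?thesis using fin unfolding An_eq_def Y_def e(2) by simp
qed

end
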